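(* Let $n_t=2$, $n_r=1$, $R>0$, $\sigma^2>0$, $\rho=1/\sigma^2$, $\overline{P}>0$, and let $h_1,h_2$ be i.i.d. $\mathcal{CN}(0,1)$. Define on $\mathcal{P}_2=\{(p_1,p_2)\in\mathbb{R}_+^2\setminus\{0\}: p_1+p_2\le\overline{P}\}$ $$\Gamma^{\mathrm{TISO}}(p_1,p_2)=\frac{R\left\{1-\Pr\left[\log_2(1+\rho(p_1|h_1|^2+p_2|h_2|^2))<R\right]\right\}}{p_1+p_2}.$$ Then $\Gamma^{\mathrm{TISO}}$ is not quasi-concave on $\mathcal{P}_2$: there exists $\gamma\ge0$ such that the upper level set $\{(p_1,p_2)\in\mathcal{P}_2:\Gamma^{\mathrm{TISO}}(p_1,p_2)\ge\gamma\}$ is not convex. *)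

theory Defs
  imports "HOL-Probability.Probability"
begin

definition CN01 :: "complex measure" where
  "CN01 = density lborel (\<lambda>z. ennreal (exp (- ((cmod z)^2)) / pi))"

definition channel_law :: "(complex \<times> complex) measure" where
  "channel_law = CN01 \<Otimes>\<^sub>M CN01"

definition outage_TISO :: "real \<Rightarrow> real \<Rightarrow> real \<Rightarrow> real \<Rightarrow> real" where
  "outage_TISO R sigma2 p1 p2 =
     measure channel_law
       {h. log 2 (1 + (1 / sigma2) * (p1 * (cmod (fst h))^2 + p2 * (cmod (snd h))^2)) < R}"

definition Gamma_TISO :: "real \<Rightarrow> real \<Rightarrow> real \<Rightarrow> real \<Rightarrow> real" where
  "Gamma_TISO R sigma2 p1 p2 = R * (1 - outage_TISO R sigma2 p1 p2) / (p1 + p2)"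

definition P2 :: "real \<Rightarrow> (real \<times> real) set" where
  "P2 Pbar = {(p1, p2). p1 \<ge> 0 \<and> p2 \<ge> 0 \<and> (p1, p2) \<noteq> (0, 0) \<and> p1 + p2 \<le> Pbar}"

end

theory Submission
  imports Defs "HOL-Real_Asymp.Real_Asymp"
begin


lemma exp_tail: "(\<integral>\<^sup>+s. ennreal (exp (-s)) * indicator {b..} s \<partial>lborel) = ennreal (exp (-b))"
proof -
  have "(\<integral>\<^sup>+s. ennreal (exp (-s)) * indicator {b..} s \<partial>lborel) = ennreal (0 - (- exp (-b)))"
    by (rule nn_integral_FTC_atLeast[where F="\<lambda>s. - exp (-s)"])
       (auto intro!: derivative_eq_intros, real_asymp)
  then show ?thesis by simp
qed

lemma lin_exp_tail: "(\<integral>\<^sup>+s. ennreal (exp (-s) * (s - a)) * indicator {a..} s \<partial>lborel) = ennreal (exp (-a))"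
proof -
  have "(\<integral>\<^sup>+s. ennreal (exp (-s) * (s - a)) * indicator {a..} s \<partial>lborel) = ennreal (0 - (- (a - a + 1) * exp (-a)))"
    by (rule nn_integral_FTC_atLeast[where F="\<lambda>s. - (s - a + 1) * exp (-s)"])
       (auto intro!: derivative_eq_intros simp: algebra_simps, real_asymp)
  then show ?thesis by simp
qed


lemma cball_meas: "r \<ge> 0 \<Longrightarrow> emeasure lborel (cball (0::complex) r) = ennreal (pi * r^2)"
  by (simp add: emeasure_cball unit_ball_vol_2)
lemma ball_meas: "r \<ge> 0 \<Longrightarrow> emeasure lborel (ball (0::complex) r) = ennreal (pi * r^2)"
  by (simp add: emeasure_ball unit_ball_vol_2)




lemma le_sqrt_iff2: "0 \<le> (y::real) \<Longrightarrow> (y \<le> sqrt s \<longleftrightarrow> y^2 \<le> s)"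
  by (metis real_sqrt_abs real_sqrt_le_iff abs_of_nonneg)
lemma less_sqrt_iff2: "0 \<le> (y::real) \<Longrightarrow> (y < sqrt s \<longleftrightarrow> y^2 < s)"
  by (metis real_sqrt_abs real_sqrt_less_iff abs_of_nonneg)

lemma annulus:
  assumes "0 \<le> a" "a \<le> s"
  shows "emeasure lborel {z::complex. a \<le> (cmod z)^2 \<and> (cmod z)^2 \<le> s} = ennreal (pi * (s - a))"
proof -
  have eq: "{z::complex. a \<le> (cmod z)^2 \<and> (cmod z)^2 \<le> s} = cball 0 (sqrt s) - ball 0 (sqrt a)"
    using assms by (auto simp: le_sqrt_iff2 less_sqrt_iff2 not_less)
  have sub: "ball (0::complex) (sqrt a) \<subseteq> cball 0 (sqrt s)"
    using assms by (auto simp: subset_eq) (meson less_le_trans real_sqrt_le_mono less_imp_le)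
  have "emeasure lborel (cball (0::complex) (sqrt s) - ball 0 (sqrt a)) =
        emeasure lborel (cball (0::complex) (sqrt s)) - emeasure lborel (ball (0::complex) (sqrt a))"
    by (rule emeasure_Diff) (use sub assms in \<open>auto simp: cball_meas ball_meas\<close>)
  also have "\<dots> = ennreal (pi * s) - ennreal (pi * a)"
    using assms by (simp add: cball_meas ball_meas)
  also have "\<dots> = ennreal (pi * (s - a))"
    using assms by (simp add: ennreal_minus algebra_simps)
  finally show ?thesis using eq by simp
qed

lemma annulus_empty:
  assumes "\<not> a \<le> s"
  shows "{z::complex. a \<le> (cmod z)^2 \<and> (cmod z)^2 \<le> s} = {}"
  using assms by auto




lemma CN01_tail:
  assumes a: "0 \<le> a"
  shows "emeasure CN01 {z. a \<le> (cmod z)^2} = ennreal (exp (-a))"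
proof -
  have P: "pair_sigma_finite (lborel::complex measure) (lborel::real measure)"
    by (simp add: pair_sigma_finite_def lborel.sigma_finite_measure_axioms)
  have Sm: "{z::complex. a \<le> (cmod z)^2} \<in> sets lborel" by measurable
  have "emeasure CN01 {z. a \<le> (cmod z)^2} =
      (\<integral>\<^sup>+z. ennreal (exp (- ((cmod z)^2)) / pi) * indicator {z. a \<le> (cmod z)^2} z \<partial>lborel)"
    unfolding CN01_def using Sm by (simp add: emeasure_density)
  also have "\<dots> = (\<integral>\<^sup>+z. \<integral>\<^sup>+s. ennreal (exp (-s) / pi) *
        indicator {(z,s). a \<le> (cmod z)^2 \<and> (cmod z)^2 \<le> s} (z,s) \<partial>lborel \<partial>lborel)"
  proof (rule nn_integral_cong)
    fix z :: complex
    have "(\<integral>\<^sup>+s. ennreal (exp (-s) / pi) *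
        indicator {(z,s). a \<le> (cmod z)^2 \<and> (cmod z)^2 \<le> s} (z,s) \<partial>lborel) =
        (\<integral>\<^sup>+s. ennreal (1/pi) * (indicator {z. a \<le> (cmod z)^2} z * (ennreal (exp (-s)) * indicator {(cmod z)^2..} s)) \<partial>lborel)"
      by (intro nn_integral_cong) (auto split: split_indicator simp: ennreal_mult'[symmetric])
    also have "\<dots> = ennreal (1/pi) * (indicator {z. a \<le> (cmod z)^2} z * (\<integral>\<^sup>+s. ennreal (exp (-s)) * indicator {(cmod z)^2..} s \<partial>lborel))"
      by (simp add: nn_integral_cmult)
    also have "\<dots> = ennreal (exp (- ((cmod z)^2)) / pi) * indicator {z. a \<le> (cmod z)^2} z"
    proof -
      have "ennreal (exp (- ((cmod z)^2)) / pi) = ennreal (1/pi) * ennreal (exp (- ((cmod z)^2)))"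
        by (simp add: ennreal_mult[symmetric])
      then show ?thesis by (simp add: exp_tail ac_simps)
    qed
    finally show "ennreal (exp (- ((cmod z)^2)) / pi) * indicator {z. a \<le> (cmod z)^2} z =
       (\<integral>\<^sup>+s. ennreal (exp (-s) / pi) *
        indicator {(z,s). a \<le> (cmod z)^2 \<and> (cmod z)^2 \<le> s} (z,s) \<partial>lborel)" by simp
  qed
  also have "\<dots> = (\<integral>\<^sup>+s. \<integral>\<^sup>+z. ennreal (exp (-s) / pi) *
        indicator {(z,s). a \<le> (cmod z)^2 \<and> (cmod z)^2 \<le> s} (z,s) \<partial>lborel \<partial>lborel)"
    by (rule pair_sigma_finite.Fubini'[OF P, symmetric]) measurable
  also have "\<dots> = (\<integral>\<^sup>+s. ennreal (exp (-s) * (s - a)) * indicator {a..} s \<partial>lborel)"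
  proof (rule nn_integral_cong)
    fix s :: real
    have "(\<integral>\<^sup>+z. ennreal (exp (-s) / pi) *
        indicator {(z,s). a \<le> (cmod z)^2 \<and> (cmod z)^2 \<le> s} (z,s) \<partial>lborel) =
        (\<integral>\<^sup>+z. ennreal (exp (-s) / pi) * indicator {z::complex. a \<le> (cmod z)^2 \<and> (cmod z)^2 \<le> s} z \<partial>lborel)"
      by (intro nn_integral_cong) (auto split: split_indicator)
    also have "\<dots> = ennreal (exp (-s) / pi) * emeasure lborel {z::complex. a \<le> (cmod z)^2 \<and> (cmod z)^2 \<le> s}"
      by (rule nn_integral_cmult_indicator) measurable
    also have "\<dots> = ennreal (exp (-s) * (s - a)) * indicator {a..} s"
    proof (cases "a \<le> s")
      case True
      then show ?thesis using a by (simp add: annulus ennreal_mult'[symmetric])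
    next
      case False
      then show ?thesis by (simp add: annulus_empty)
    qed
    finally show "(\<integral>\<^sup>+z. ennreal (exp (-s) / pi) *
        indicator {(z,s). a \<le> (cmod z)^2 \<and> (cmod z)^2 \<le> s} (z,s) \<partial>lborel) =
        ennreal (exp (-s) * (s - a)) * indicator {a..} s" .
  qed
  also have "\<dots> = ennreal (exp (-a))" by (rule lin_exp_tail)
  finally show ?thesis .
qed




lemma space_CN01[simp]: "space CN01 = UNIV" by (simp add: CN01_def)
lemma sets_CN01[simp, measurable_cong]: "sets CN01 = sets borel" by (simp add: CN01_def)

lemma CN01_prob: "prob_space CN01"
proof
  have "emeasure CN01 {z. 0 \<le> (cmod z)^2} = 1" using CN01_tail[of 0] by simp
  moreover have "{z. 0 \<le> (cmod z)^2} = UNIV" by auto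
  ultimately show "emeasure CN01 (space CN01) = 1" by simp
qed

lemma CN01_disk:
  assumes c: "0 \<le> c"
  shows "(\<integral>\<^sup>+z. indicator {z. (cmod z)^2 \<le> c} z * ennreal (exp ((cmod z)^2 - c)) \<partial>CN01) = ennreal (c * exp (-c))"
proof -
  have "(\<integral>\<^sup>+z. indicator {z. (cmod z)^2 \<le> c} z * ennreal (exp ((cmod z)^2 - c)) \<partial>CN01) =
     (\<integral>\<^sup>+z. ennreal (exp (- ((cmod z)^2)) / pi) * (indicator {z. (cmod z)^2 \<le> c} z * ennreal (exp ((cmod z)^2 - c))) \<partial>lborel)"
    unfolding CN01_def by (rule nn_integral_density) measurable
  also have "\<dots> = (\<integral>\<^sup>+z. ennreal (exp (-c) / pi) * indicator (cball (0::complex) (sqrt c)) z \<partial>lborel)"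
  proof (rule nn_integral_cong)
    fix z :: complex
    have e: "exp (- ((cmod z)^2)) / pi * exp ((cmod z)^2 - c) = exp (-c) / pi"
      by (simp add: exp_add[symmetric])
    show "ennreal (exp (- ((cmod z)^2)) / pi) * (indicator {z. (cmod z)^2 \<le> c} z * ennreal (exp ((cmod z)^2 - c))) =
        ennreal (exp (-c) / pi) * indicator (cball (0::complex) (sqrt c)) z"
      using e by (auto split: split_indicator simp: le_sqrt_iff2 ennreal_mult'[symmetric])
  qed
  also have "\<dots> = ennreal (exp (-c) / pi) * emeasure lborel (cball (0::complex) (sqrt c))"
    by (rule nn_integral_cmult_indicator) simp
  also have "\<dots> = ennreal (c * exp (-c))"
    using c by (simp add: cball_meas ennreal_mult'[symmetric])
  finally show ?thesis .
qed

lemma CN01_tail_gen: "emeasure CN01 {z. a \<le> (cmod z)^2} = ennreal (exp (- max a 0))"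
proof (cases "0 \<le> a")
  case True then show ?thesis by (simp add: CN01_tail)
next
  case False
  then have "{z. a \<le> (cmod z)^2} = space CN01" by (auto intro: order_trans[of _ 0])
  then show ?thesis using False prob_space.emeasure_space_1[OF CN01_prob] by simp
qed

lemma channel_tail:
  assumes c: "0 \<le> c"
  shows "emeasure channel_law {h. c \<le> (cmod (fst h))^2 + (cmod (snd h))^2} \<le> ennreal ((1 + c) * exp (-c))"
proof -
  interpret C: prob_space CN01 by (rule CN01_prob)
  have X: "{h. c \<le> (cmod (fst h))^2 + (cmod (snd h))^2} \<in> sets (CN01 \<Otimes>\<^sub>M CN01)"
  proof -
    have eq: "sets (CN01 \<Otimes>\<^sub>M CN01) = sets (borel \<Otimes>\<^sub>M (borel::complex measure))"
      by (intro sets_pair_measure_cong) simp_all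
    have F: "(\<lambda>h::complex\<times>complex. (cmod (fst h))^2 + (cmod (snd h))^2) \<in> borel_measurable (borel \<Otimes>\<^sub>M borel)" by measurable
    have "(\<lambda>h::complex\<times>complex. (cmod (fst h))^2 + (cmod (snd h))^2) -` {c..} \<inter> space (borel \<Otimes>\<^sub>M borel) \<in> sets (borel \<Otimes>\<^sub>M borel)"
      by (rule measurable_sets[OF F]) simp
    then show ?thesis using eq by (simp add: space_pair_measure vimage_def)
  qed
  have "emeasure channel_law {h. c \<le> (cmod (fst h))^2 + (cmod (snd h))^2} =
     (\<integral>\<^sup>+x. emeasure CN01 (Pair x -` {h. c \<le> (cmod (fst h))^2 + (cmod (snd h))^2}) \<partial>CN01)"
    unfolding channel_law_def by (rule C.emeasure_pair_measure_alt[OF X])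
  also have "\<dots> = (\<integral>\<^sup>+x. ennreal (exp (- max (c - (cmod x)^2) 0)) \<partial>CN01)"
  proof (rule nn_integral_cong)
    fix x
    have "Pair x -` {h. c \<le> (cmod (fst h))^2 + (cmod (snd h))^2} = {z. c - (cmod x)^2 \<le> (cmod z)^2}"
      by auto
    then show "emeasure CN01 (Pair x -` {h. c \<le> (cmod (fst h))^2 + (cmod (snd h))^2}) = ennreal (exp (- max (c - (cmod x)^2) 0))"
      by (simp add: CN01_tail_gen)
  qed
  also have "\<dots> \<le> (\<integral>\<^sup>+x. indicator {z. (cmod z)^2 \<le> c} x * ennreal (exp ((cmod x)^2 - c)) + indicator {z. c \<le> (cmod z)^2} x \<partial>CN01)"
    by (intro nn_integral_mono) (auto split: split_indicator simp: max_def)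
  also have "\<dots> = (\<integral>\<^sup>+x. indicator {z. (cmod z)^2 \<le> c} x * ennreal (exp ((cmod x)^2 - c)) \<partial>CN01) + 
     (\<integral>\<^sup>+x. indicator {z. c \<le> (cmod z)^2} x \<partial>CN01)"
    by (rule nn_integral_add) measurable
  also have "\<dots> = ennreal (c * exp (-c)) + ennreal (exp (-c))"
    using c by (simp add: CN01_disk CN01_tail)
  also have "\<dots> = ennreal ((1 + c) * exp (-c))"
    using c by (simp add: ennreal_plus[symmetric] algebra_simps del: ennreal_plus)
  finally show ?thesis .
qed




lemma channel_prob: "prob_space channel_law"
  unfolding channel_law_def by (intro prob_space_pair CN01_prob)

lemma space_channel[simp]: "space channel_law = UNIV"
  by (simp add: channel_law_def space_pair_measure)

lemma sets_channel: "sets channel_law = sets (borel \<Otimes>\<^sub>M (borel::complex measure))"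
  unfolding channel_law_def by (intro sets_pair_measure_cong) simp_all

lemma cond_iff:
  assumes s: "sigma2 > 0" and x: "0 \<le> x"
  shows "log 2 (1 + (1 / sigma2) * x) < R \<longleftrightarrow> x < sigma2 * (2 powr R - 1)"
proof -
  have pos: "0 < 1 + (1 / sigma2) * x" using s x by (simp add: add_pos_nonneg)
  have "log 2 (1 + (1 / sigma2) * x) < R \<longleftrightarrow> 1 + (1 / sigma2) * x < 2 powr R"
    by (rule log_less_iff) (use pos in auto)
  also have "\<dots> \<longleftrightarrow> x < sigma2 * (2 powr R - 1)"
    using s by (simp add: field_simps)
  finally show ?thesis .
qed

lemma outage_eq:
  assumes s: "sigma2 > 0" and p: "0 \<le> p1" "0 \<le> p2"
  shows "outage_TISO R sigma2 p1 p2 =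
    1 - measure channel_law {h. sigma2 * (2 powr R - 1) \<le> p1 * (cmod (fst h))^2 + p2 * (cmod (snd h))^2}"
proof -
  interpret CL: prob_space channel_law by (rule channel_prob)
  let ?t = "sigma2 * (2 powr R - 1)"
  let ?F = "\<lambda>h::complex\<times>complex. p1 * (cmod (fst h))^2 + p2 * (cmod (snd h))^2"
  have F: "?F \<in> borel_measurable (borel \<Otimes>\<^sub>M borel)" by measurable
  have "?F -` {?t..} \<inter> space (borel \<Otimes>\<^sub>M borel) \<in> sets (borel \<Otimes>\<^sub>M borel)"
    by (rule measurable_sets[OF F]) simp
  then have M: "{h. ?t \<le> ?F h} \<in> sets channel_law"
    by (simp add: sets_channel space_pair_measure vimage_def)
  have "{h. log 2 (1 + (1 / sigma2) * ?F h) < R} = space channel_law - {h. ?t \<le> ?F h}"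
    using cond_iff[OF s] p by (auto simp: not_le)
  then have "outage_TISO R sigma2 p1 p2 = CL.prob (space channel_law - {h. ?t \<le> ?F h})"
    by (simp add: outage_TISO_def)
  also have "\<dots> = 1 - CL.prob {h. ?t \<le> ?F h}" by (rule CL.prob_compl[OF M])
  finally show ?thesis .
qed

lemma exp_ineq:
  fixes u :: real
  assumes "u > 4"
  shows "(1 + 2*u) * exp (-(2*u)) < exp (-u)"
proof -
  have "exp (u/2) \<ge> 1 + u/2" by (rule exp_ge_add_one_self)
  then have "exp (u/2)^2 \<ge> (1 + u/2)^2" using assms by (intro power_mono) auto
  moreover have "exp (u/2)^2 = exp u" by (simp add: exp_double[symmetric] power2_eq_square exp_add[symmetric])
  moreover have "(1 + u/2)^2 > 1 + 2*u"
  proof -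
    have "u * u > 4 * u" using assms by (intro mult_strict_right_mono) auto
    then show ?thesis by (simp add: power2_eq_square algebra_simps)
  qed
  ultimately have "1 + 2*u < exp u" by linarith
  then have "(1 + 2*u) * exp (-(2*u)) < exp u * exp (-(2*u))" by (intro mult_strict_right_mono) auto
  also have "\<dots> = exp (-u)" by (simp add: exp_add[symmetric])
  finally show ?thesis .
qed




lemma succ_fst:
  assumes "0 \<le> u"
  shows "measure channel_law ({z. u \<le> (cmod z)^2} \<times> UNIV) = exp (-u)"
proof -
  interpret C: prob_space CN01 by (rule CN01_prob)
  have "emeasure channel_law ({z. u \<le> (cmod z)^2} \<times> UNIV) = emeasure CN01 {z. u \<le> (cmod z)^2} * emeasure CN01 UNIV"
    unfolding channel_law_def by (rule C.emeasure_pair_measure_Times) (simp_all, measurable)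
  also have "\<dots> = ennreal (exp (-u))" using assms C.emeasure_space_1 by (simp add: CN01_tail)
  finally show ?thesis by (simp add: measure_def)
qed

lemma succ_snd:
  assumes "0 \<le> u"
  shows "measure channel_law (UNIV \<times> {z. u \<le> (cmod z)^2}) = exp (-u)"
proof -
  interpret C: prob_space CN01 by (rule CN01_prob)
  have "emeasure channel_law (UNIV \<times> {z. u \<le> (cmod z)^2}) = emeasure CN01 UNIV * emeasure CN01 {z. u \<le> (cmod z)^2}"
    unfolding channel_law_def by (rule C.emeasure_pair_measure_Times) (simp_all, measurable)
  also have "\<dots> = ennreal (exp (-u))" using assms C.emeasure_space_1 by (simp add: CN01_tail)
  finally show ?thesis by (simp add: measure_def)
qed

lemma succ_mid:
  assumes "0 \<le> c"
  shows "measure channel_law {h. c \<le> (cmod (fst h))^2 + (cmod (snd h))^2} \<le> (1 + c) * exp (-c)"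
proof -
  interpret CL: prob_space channel_law by (rule channel_prob)
  show ?thesis using channel_tail[OF assms] assms
    by (simp add: CL.emeasure_eq_measure ennreal_le_iff)
qed

theorem mainTheorem8:
  fixes R sigma2 Pbar :: real
  assumes "R > 0" and "sigma2 > 0" and "Pbar > 0"
  shows "\<exists>\<gamma>\<ge>0. \<not> convex {p \<in> P2 Pbar. Gamma_TISO R sigma2 (fst p) (snd p) \<ge> \<gamma>}"
proof -
  define t where "t = sigma2 * (2 powr R - 1)"
  have "2 powr R > 1" using assms(1) by (simp add: less_powr_iff)
  then have tpos: "t > 0" using assms(2) by (simp add: t_def)
  define p where "p = min Pbar (t/5)"
  have ppos: "p > 0" and pP: "p \<le> Pbar" using tpos assms(3) by (auto simp: p_def)
  define u where "u = t / p"
  have u4: "u > 4"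
  proof -
    have "p \<le> t/5" by (simp add: p_def)
    then have "5 \<le> t / p" using ppos by (simp add: field_simps)
    then show ?thesis by (simp add: u_def)
  qed
  define \<gamma> where "\<gamma> = R * exp (-u) / p"
  have g0: "\<gamma> \<ge> 0" using assms(1) ppos by (simp add: \<gamma>_def)
  define S where "S = {q \<in> P2 Pbar. Gamma_TISO R sigma2 (fst q) (snd q) \<ge> \<gamma>}"
  have key: "\<And>x. t \<le> p * x \<longleftrightarrow> u \<le> x" using ppos by (simp add: u_def pos_divide_le_eq mult.commute)
  have G1: "Gamma_TISO R sigma2 p 0 = \<gamma>"
  proof -
    have "{h. t \<le> p * (cmod (fst h))^2 + 0 * (cmod (snd h))^2} = {z. u \<le> (cmod z)^2} \<times> UNIV"
      by (auto simp: key)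
    moreover have "outage_TISO R sigma2 p 0 = 1 - measure channel_law {h. t \<le> p * (cmod (fst h))^2 + 0 * (cmod (snd h))^2}"
      unfolding t_def by (rule outage_eq[OF assms(2)]) (use ppos in auto)
    ultimately have "outage_TISO R sigma2 p 0 = 1 - exp (-u)"
      using succ_fst[of u] u4 by simp
    then show ?thesis by (simp add: Gamma_TISO_def \<gamma>_def)
  qed
  have G2: "Gamma_TISO R sigma2 0 p = \<gamma>"
  proof -
    have "{h. t \<le> 0 * (cmod (fst h))^2 + p * (cmod (snd h))^2} = UNIV \<times> {z. u \<le> (cmod z)^2}"
      by (auto simp: key)
    moreover have "outage_TISO R sigma2 0 p = 1 - measure channel_law {h. t \<le> 0 * (cmod (fst h))^2 + p * (cmod (snd h))^2}"
      unfolding t_def by (rule outage_eq[OF assms(2)]) (use ppos in auto)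
    ultimately have "outage_TISO R sigma2 0 p = 1 - exp (-u)"
      using succ_snd[of u] u4 by simp
    then show ?thesis by (simp add: Gamma_TISO_def \<gamma>_def)
  qed
  have G3: "Gamma_TISO R sigma2 (p/2) (p/2) < \<gamma>"
  proof -
    have "\<And>a b. t \<le> p/2 * a + p/2 * b \<longleftrightarrow> 2*u \<le> a + b"
    proof -
      fix a b :: real
      have eqab: "p/2 * a + p/2 * b = p * ((a + b)/2)" by (simp add: field_simps)
      have "t \<le> p/2 * a + p/2 * b \<longleftrightarrow> t \<le> p * ((a + b)/2)" by (simp only: eqab)
      also have "\<dots> \<longleftrightarrow> u \<le> (a+b)/2" by (rule key)
      also have "\<dots> \<longleftrightarrow> 2*u \<le> a + b" by (simp add: mult.commute)
      finally show "t \<le> p/2 * a + p/2 * b \<longleftrightarrow> 2*u \<le> a + b" .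
    qed
    then have seq: "{h. t \<le> p/2 * (cmod (fst h))^2 + p/2 * (cmod (snd h))^2} = {h. 2*u \<le> (cmod (fst h))^2 + (cmod (snd h))^2}"
      by auto
    define m where "m = measure channel_law {h. 2*u \<le> (cmod (fst h))^2 + (cmod (snd h))^2}"
    have "m \<le> (1 + 2*u) * exp (-(2*u))" unfolding m_def by (rule succ_mid) (use u4 in auto)
    then have mlt: "m < exp (-u)" using exp_ineq[OF u4] by linarith
    have "outage_TISO R sigma2 (p/2) (p/2) = 1 - measure channel_law {h. t \<le> p/2 * (cmod (fst h))^2 + p/2 * (cmod (snd h))^2}"
      unfolding t_def by (rule outage_eq[OF assms(2)]) (use ppos in auto)
    then have "outage_TISO R sigma2 (p/2) (p/2) = 1 - m"
      by (simp only: seq m_def)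
    then have "Gamma_TISO R sigma2 (p/2) (p/2) = R * m / p" by (simp add: Gamma_TISO_def)
    also have "\<dots> < \<gamma>" using mlt assms(1) ppos by (simp add: \<gamma>_def divide_strict_right_mono)
    finally show ?thesis .
  qed
  have in1: "(p, 0) \<in> S" using G1 ppos pP by (simp add: S_def P2_def)
  have in2: "(0, p) \<in> S" using G2 ppos pP by (simp add: S_def P2_def)
  have notin: "(p/2, p/2) \<notin> S" using G3 by (simp add: S_def)
  have "\<not> convex S"
  proof
    assume "convex S"
    then have "(1/2::real) *\<^sub>R (p, 0::real) + (1/2::real) *\<^sub>R (0::real, p) \<in> S"
      using in1 in2 by (rule convexD) auto
    then show False using notin by simp
  qed
  then show ?thesis using g0 unfolding S_def by blast
qed


end
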